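(* Suppose $\hat q^{[k]}\in\Delta_\delta$ for all $k\ge1$. Then for every round $t\ge2$ and all $s\in\mathcal S$, $a\in\mathcal A$, regardless of the history up to round $t-1$ (i.e. conditionally on any such history), $\Pr\big((s^t,a^t)=(s,a)\big)\ge\alpha\delta$.
   Context: $\mathcal S,\mathcal A$ finite; $P$ is a transition kernel with $P(s'|s,a)\ge\alpha>0$ for all $s,s',a$, and $s^{t+1}\sim P(\cdot|s^t,a^t)$. $\Delta$ is the set of $q\in\mathbb R_+^{\mathcal S\times\mathcal A\times\mathcal S}$ with $\sum_{s,a,s'}q(s,a,s')=1$ and $\sum_{s',a}q(s',a,s)=\sum_{a,s'}q(s,a,s')$ for all $s$; $\Delta_\delta=\{q\in\Delta:\sum_{s'}q(s,a,s')\ge\delta\ \forall s,a\}$ for $\delta\in(0,1)$; the policy induced by $q$ is $\pi^q(a|s)=\sum_{s'}q(s,a,s')/\sum_{a',s'}q(s,a',s')$. In algorithm IHMDP-VCG, time is divided into episodes $k=1,2,\dots$; in each round $t$ of episode $k$ the action is drawn as $a^t\sim\pi^{[k]}(\cdot|s^t)$ with $\pi^{[k]}=\pi^{\hat q^{[k]}}$, where $\hat q^{[k]}$ is determined by the history before episode $k$. *)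

theory Defs
  imports "HOL-Probability.Probability"
begin

text \<open>Occupancy measures q over S x A x S, written as a curried function q s a s'.\<close>

definition in_Delta :: "('s::finite \<Rightarrow> 'a::finite \<Rightarrow> 's \<Rightarrow> real) \<Rightarrow> bool" where
  "in_Delta q \<longleftrightarrow>
     (\<forall>s a s'. 0 \<le> q s a s') \<and>
     (\<Sum>s\<in>UNIV. \<Sum>a\<in>UNIV. \<Sum>s'\<in>UNIV. q s a s') = 1 \<and>
     (\<forall>s. (\<Sum>s'\<in>UNIV. \<Sum>a\<in>UNIV. q s' a s) = (\<Sum>a\<in>UNIV. \<Sum>s'\<in>UNIV. q s a s'))"

definition in_Delta_delta :: "real \<Rightarrow> ('s::finite \<Rightarrow> 'a::finite \<Rightarrow> 's \<Rightarrow> real) \<Rightarrow> bool" where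
  "in_Delta_delta \<delta> q \<longleftrightarrow> in_Delta q \<and> (\<forall>s a. (\<Sum>s'\<in>UNIV. q s a s') \<ge> \<delta>)"

definition pi_q :: "('s::finite \<Rightarrow> 'a::finite \<Rightarrow> 's \<Rightarrow> real) \<Rightarrow> 's \<Rightarrow> 'a \<Rightarrow> real" where
  "pi_q q s a = (\<Sum>s'\<in>UNIV. q s a s') / (\<Sum>a'\<in>UNIV. \<Sum>s'\<in>UNIV. q s a' s')"

text \<open>The policy as a distribution over actions (a genuine distribution whenever q is in Delta_delta).\<close>
definition policy_pmf :: "('s::finite \<Rightarrow> 'a::finite \<Rightarrow> 's \<Rightarrow> real) \<Rightarrow> 's \<Rightarrow> 'a pmf" where
  "policy_pmf q s = embed_pmf (pi_q q s)"

text \<open>Conditional law of (s^t, a^t) given the history h = [(s^1,a^1),...,(s^{t-1},a^{t-1})]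
  (so t = length h + 1).  Round t belongs to episode ep t, which starts at round start (ep t);
  the estimate qhat k is a function of the history before episode k, i.e. of the first
  start k - 1 pairs of h.\<close>
definition step_pmf ::
  "('s::finite \<Rightarrow> 'a::finite \<Rightarrow> 's pmf) \<Rightarrow> (nat \<Rightarrow> ('s \<times> 'a) list \<Rightarrow> ('s \<Rightarrow> 'a \<Rightarrow> 's \<Rightarrow> real))
    \<Rightarrow> (nat \<Rightarrow> nat) \<Rightarrow> (nat \<Rightarrow> nat) \<Rightarrow> ('s \<times> 'a) list \<Rightarrow> ('s \<times> 'a) pmf" where
  "step_pmf P qhat ep start h =
     (let k = ep (length h + 1);
          qk = qhat k (take (start k - 1) h)
      in do { s \<leftarrow> P (fst (last h)) (snd (last h));
              a \<leftarrow> policy_pmf qk s;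
              return_pmf (s, a) })"

end

theory Submission
  imports Defs
begin

lemma pi_q_facts:
  fixes q :: "'s::finite \<Rightarrow> 'a::finite \<Rightarrow> 's \<Rightarrow> real"
  assumes "in_Delta_delta \<delta> q" "0 < \<delta>"
  shows "pmf (policy_pmf q s) a = pi_q q s a \<and> pi_q q s a \<ge> \<delta>"
proof -
  have nn: "\<And>s a s'. 0 \<le> q s a s'" and tot: "(\<Sum>s\<in>UNIV. \<Sum>a\<in>UNIV. \<Sum>s'\<in>UNIV. q s a s') = 1"
    and lb: "\<And>s a. (\<Sum>s'\<in>UNIV. q s a s') \<ge> \<delta>"
    using assms unfolding in_Delta_delta_def in_Delta_def by auto
  define D where "D = (\<Sum>a'\<in>UNIV. \<Sum>s'\<in>UNIV. q s a' s')"
  have "D \<ge> (\<Sum>s'\<in>UNIV. q s a s')" unfolding D_def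
    by (rule member_le_sum) (auto intro: sum_nonneg nn)
  hence Dpos: "D \<ge> \<delta>" "D > 0" using lb[of s a] assms(2) by auto
  have "D \<le> (\<Sum>s\<in>UNIV. \<Sum>a\<in>UNIV. \<Sum>s'\<in>UNIV. q s a s')" unfolding D_def
    by (rule member_le_sum[where f="\<lambda>s. \<Sum>a\<in>UNIV. \<Sum>s'\<in>UNIV. q s a s'"]) (auto intro!: sum_nonneg nn)
  hence D1: "D \<le> 1" using tot by simp
  have pinn: "\<And>x. 0 \<le> pi_q q s x" unfolding pi_q_def D_def[symmetric]
    using Dpos by (auto intro!: divide_nonneg_pos sum_nonneg nn)
  have "(\<Sum>x\<in>UNIV. pi_q q s x) = 1" unfolding pi_q_def D_def[symmetric]
    using Dpos by (simp add: sum_divide_distrib[symmetric] D_def)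
  hence "(\<integral>\<^sup>+x. pi_q q s x \<partial>count_space UNIV) = 1"
    by (simp add: nn_integral_count_space_finite sum_ennreal pinn)
  hence "pmf (policy_pmf q s) a = pi_q q s a"
    unfolding policy_pmf_def using pmf_embed_pmf[of "pi_q q s", OF pinn] by blast
  moreover have "pi_q q s a \<ge> \<delta>"
  proof -
    have "\<delta> \<le> (\<Sum>s'\<in>UNIV. q s a s')" by (rule lb)
    also have "\<dots> \<le> (\<Sum>s'\<in>UNIV. q s a s') / D" using Dpos D1
      by (simp add: le_divide_eq mult_left_le sum_nonneg nn)
    finally show ?thesis unfolding pi_q_def D_def .
  qed
  ultimately show ?thesis by blast
qed

theorem lemma6:
  fixes P :: "'s::finite \<Rightarrow> 'a::finite \<Rightarrow> 's pmf"
    and qhat :: "nat \<Rightarrow> ('s \<times> 'a) list \<Rightarrow> ('s \<Rightarrow> 'a \<Rightarrow> 's \<Rightarrow> real)"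
    and ep start :: "nat \<Rightarrow> nat"
    and \<alpha> \<delta> :: real
  assumes alpha_pos: "\<alpha> > 0"
    and P_lower: "\<forall>s a s'. pmf (P s a) s' \<ge> \<alpha>"
    and delta: "0 < \<delta>" "\<delta> < 1"
    and episodes: "\<forall>t\<ge>1. 1 \<le> start (ep t) \<and> start (ep t) \<le> t"
    and qhat_in: "\<forall>k\<ge>1. \<forall>h. in_Delta_delta \<delta> (qhat k h)"
    and ep_pos: "\<forall>t\<ge>1. ep t \<ge> 1"
  shows "\<forall>t\<ge>2. \<forall>h. length h = t - 1 \<longrightarrow>
           (\<forall>s a. pmf (step_pmf P qhat ep start h) (s, a) \<ge> \<alpha> * \<delta>)"
proof (intro allI impI)
  fix t and h :: "('s \<times> 'a) list" and s a
  assume "2 \<le> t" "length h = t - 1"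
  define k where "k = ep (length h + 1)"
  define qk where "qk = qhat k (take (start k - 1) h)"
  define M where "M = P (fst (last h)) (snd (last h))"
  have "k \<ge> 1" unfolding k_def using ep_pos by auto
  hence qin: "in_Delta_delta \<delta> qk" unfolding qk_def using qhat_in by auto
  have eq: "step_pmf P qhat ep start h = bind_pmf M (\<lambda>s. bind_pmf (policy_pmf qk s) (\<lambda>a. return_pmf (s, a)))"
    unfolding step_pmf_def k_def[symmetric] qk_def[symmetric] M_def Let_def by simp
  have inner: "\<And>s0. pmf (bind_pmf (policy_pmf qk s0) (\<lambda>a. return_pmf (s0, a))) (s, a)
      = (if s0 = s then pmf (policy_pmf qk s0) a else 0)"
  proof -
    fix s0
    have "pmf (bind_pmf (policy_pmf qk s0) (\<lambda>a. return_pmf (s0, a))) (s, a)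
       = pmf (map_pmf (\<lambda>a. (s0, a)) (policy_pmf qk s0)) (s, a)"
      by (simp add: map_pmf_def)
    also have "\<dots> = (if s0 = s then pmf (policy_pmf qk s0) a else 0)"
    proof (cases "s0 = s")
      case True
      then show ?thesis by (simp add: pmf_map_inj' inj_on_def)
    next
      case False
      then show ?thesis by (auto simp: pmf_eq_0_set_pmf)
    qed
    finally show "pmf (bind_pmf (policy_pmf qk s0) (\<lambda>a. return_pmf (s0, a))) (s, a)
      = (if s0 = s then pmf (policy_pmf qk s0) a else 0)" .
  qed
  have "pmf (step_pmf P qhat ep start h) (s, a) = pmf M s * pmf (policy_pmf qk s) a"
    unfolding eq
    apply (subst pmf_bind)
    unfolding inner
    by (subst integral_measure_pmf_real[where A="{s}"]) (auto split: if_splits)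
  also have "\<dots> \<ge> \<alpha> * \<delta>"
    using pi_q_facts[OF qin delta(1), of s a] P_lower alpha_pos delta unfolding M_def
    by (intro mult_mono) auto
  finally show "\<alpha> * \<delta> \<le> pmf (step_pmf P qhat ep start h) (s, a)" .
qed

end
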